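(* Let $\mathcal A$ be a commutative semiring, $V=\mathcal A^{(n)}$ free with basis $b_1,\dots,b_n$ (or $b_0,\dots,b_{n-1}$), and $\mathfrak G(V)$ its standard reduced Grassmann semialgebra. Let $2\le k<n$ and $u,u'\in\mathfrak G(V)_k$. (i) If $u\wedge v=u'\wedge v$ for all $v\in\mathfrak G(V)_{n-k}$, then $u=u'$. (ii) If $u\notin\overline{\mathfrak G(V)_k^\circ}$, then there is some $v\in\mathfrak G(V)_{n-k}$ with $u\wedge v\notin\overline{\mathfrak G(V)_n^\circ}$.
   Context: $\mathfrak G(V)=\bigoplus_r\mathfrak G(V)_r$ with $\mathfrak G(V)_0=\mathcal A$, $\mathfrak G(V)_1=V$, and for $r\ge2$, $\mathfrak G(V)_r$ the free $\mathcal A$-module with basis $\{b_I,b_I':|I|=r\}$ where $b_I=b_{i_1}\wedge\cdots\wedge b_{i_r}$ for increasing indices and $b_I'=(-)b_I$; $(-)$ is the $\mathcal A$-linear involution of $\mathfrak G(V)_r$ ($r\ge2$) exchanging $b_I$ and $b_I'$, compatible with the associative graded product $\wedge$, which satisfies $b_i\wedge b_i=\mathbb 0$ and $u\wedge w=(-)(w\wedge u)$ for $u,w\in V$. A quasi-zero is an element $x+(-)x$. $\overline{\mathfrak G^\circ}$ denotes the ideal of $\mathfrak G(V)$ generated by all quasi-zeros and all elements $w\wedge w$, $w\in V$, and $\overline{\mathfrak G(V)_r^\circ}$ its degree-$r$ part. *)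

theory Defs
  imports Main
begin

text \<open>Model of the standard reduced Grassmann semialgebra G(V) over a commutative
semiring 'a, V free with basis b_0,...,b_{n-1}.  An element is a coefficient
function  c :: nat set => bool => 'a : c I False is the coefficient of b_I and
c I True the coefficient of b_I' = (-) b_I.  In degrees 0 and 1 there are no
primed basis elements.\<close>

type_synonym 'a gelem = "nat set \<Rightarrow> bool \<Rightarrow> 'a"

definition grass_hom :: "nat \<Rightarrow> nat \<Rightarrow> ('a::comm_semiring_1) gelem \<Rightarrow> bool" where
  "grass_hom n r x \<longleftrightarrow>
     (\<forall>I t. x I t \<noteq> 0 \<longrightarrow> I \<subseteq> {..<n} \<and> card I = r \<and> (r \<le> 1 \<longrightarrow> \<not> t))"

text \<open>Parity of the permutation sorting (sorted I) @ (sorted J).\<close>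
definition odd_inv :: "nat set \<Rightarrow> nat set \<Rightarrow> bool" where
  "odd_inv I J = odd (card {(i, j). i \<in> I \<and> j \<in> J \<and> j < i})"

text \<open>Bilinear extension of  b_I \<and> b_J = 0 if I, J meet, and otherwise
b_{I \<union> J} or b'_{I \<union> J} according to the sign of the shuffle; primes multiply
via (-) compatibility.\<close>
definition wedge :: "('a::comm_semiring_1) gelem \<Rightarrow> 'a gelem \<Rightarrow> 'a gelem" where
  "wedge x y = (\<lambda>K t. \<Sum>I\<in>Pow K. \<Sum>s1\<in>UNIV. \<Sum>s2\<in>UNIV.
      if ((s1 \<noteq> s2) \<noteq> odd_inv I (K - I)) = t then x I s1 * y (K - I) s2 else 0)"

inductive qz_ideal :: "nat \<Rightarrow> nat \<Rightarrow> ('a::comm_semiring_1) gelem \<Rightarrow> bool" for n where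
  zero: "qz_ideal n r (\<lambda>I t. 0)"
| quasi_zero: "2 \<le> r \<Longrightarrow> grass_hom n r x \<Longrightarrow> qz_ideal n r (\<lambda>I t. x I t + x I (\<not> t))"
| square: "grass_hom n 1 w \<Longrightarrow> qz_ideal n 2 (wedge w w)"
| add: "qz_ideal n r x \<Longrightarrow> qz_ideal n r y \<Longrightarrow> qz_ideal n r (\<lambda>I t. x I t + y I t)"
| mult_left: "qz_ideal n r x \<Longrightarrow> grass_hom n s y \<Longrightarrow> qz_ideal n (s + r) (wedge y x)"
| mult_right: "qz_ideal n r x \<Longrightarrow> grass_hom n s y \<Longrightarrow> qz_ideal n (r + s) (wedge x y)"

end

theory Submission
  imports Defs
begin

definition vJ :: "nat set \<Rightarrow> ('a::comm_semiring_1) gelem" where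
  "vJ J = (\<lambda>I t. if I = J \<and> \<not> t then 1 else 0)"

lemma wedge_vJ:
  fixes u :: "('a::comm_semiring_1) gelem"
  assumes I0: "I0 \<subseteq> {..<n}"
  shows "wedge u (vJ ({..<n} - I0)) {..<n} t = u I0 (t \<noteq> odd_inv I0 ({..<n} - I0))"
proof -
  let ?K = "{..<n::nat}"
  let ?o = "odd_inv I0 (?K - I0)"
  have inner: "(\<Sum>s1\<in>UNIV. \<Sum>s2\<in>UNIV.
      if ((s1 \<noteq> s2) \<noteq> odd_inv I (?K - I)) = t then u I s1 * vJ (?K - I0) (?K - I) s2 else 0)
      = (if I = I0 then u I0 (t \<noteq> ?o) else 0)" if "I \<in> Pow ?K" for I
  proof (cases "I = I0")
    case True
    then show ?thesis by (cases t; cases ?o) (simp_all add: UNIV_bool vJ_def)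
  next
    case False
    have "?K - I \<noteq> ?K - I0" using that I0 False by blast
    then show ?thesis using False by (simp add: UNIV_bool vJ_def)
  qed
  have "wedge u (vJ (?K - I0)) ?K t = (\<Sum>I\<in>Pow ?K. if I = I0 then u I0 (t \<noteq> ?o) else 0)"
    unfolding wedge_def using inner by (intro sum.cong) auto
  also have "\<dots> = u I0 (t \<noteq> ?o)" using I0 by (simp add: sum.delta)
  finally show ?thesis .
qed

lemma grass_hom_vJ:
  assumes "I0 \<subseteq> {..<n}" "card I0 = k" "k < n"
  shows "grass_hom n (n - k) (vJ ({..<n} - I0) :: ('a::comm_semiring_1) gelem)"
  using assms unfolding grass_hom_def vJ_def
  by (auto simp: card_Diff_subset finite_subset)

definition symm :: "('a::comm_semiring_1) gelem \<Rightarrow> bool" where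
  "symm x \<longleftrightarrow> (\<forall>I. x I False = x I True)"

lemma wedge_symm_right:
  assumes "symm x" shows "symm (wedge y x)"
proof -
  have xs: "x J True = x J False" for J using assms unfolding symm_def by simp
  have "wedge y x K False = wedge y x K True" for K
    unfolding wedge_def by (rule sum.cong[OF refl]) (simp add: UNIV_bool xs add_ac)
  then show ?thesis by (simp add: symm_def)
qed

lemma wedge_symm_left:
  assumes "symm x" shows "symm (wedge x y)"
proof -
  have xs: "x J True = x J False" for J using assms unfolding symm_def by simp
  have "wedge x y K False = wedge x y K True" for K
    unfolding wedge_def by (rule sum.cong[OF refl]) (simp add: UNIV_bool xs add_ac)
  then show ?thesis by (simp add: symm_def)
qed

lemma odd_inv_single: "odd_inv {i} {j} = (j < i)"
proof -
  have "{(a, b). a \<in> {i} \<and> b \<in> {j} \<and> b < a} = (if j < i then {(i, j)} else {})" by auto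
  then show ?thesis unfolding odd_inv_def by simp
qed

lemma wedge_sq_symm:
  fixes w :: "('a::comm_semiring_1) gelem"
  assumes gw: "grass_hom n 1 w" shows "symm (wedge w w)"
proof -
  have wT: "w I True = 0" for I using gw unfolding grass_hom_def by auto
  have w1: "w I False \<noteq> 0 \<Longrightarrow> card I = 1" for I using gw unfolding grass_hom_def by auto
  have "wedge w w K t = wedge w w K (\<not> t)" for K t
  proof (cases "finite K")
    case False
    then have "infinite (Pow K)" by simp
    then show ?thesis unfolding wedge_def by simp
  next
    case fin: True
    define f where "f I = w I False * w (K - I) False" for I
    have step1: "wedge w w K t' = (\<Sum>I\<in>Pow K. if odd_inv I (K - I) = t' then f I else 0)" for t'
      unfolding wedge_def f_def by (rule sum.cong[OF refl]) (simp add: UNIV_bool wT)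
    have fsym: "f (K - I) = f I" if "I \<in> Pow K" for I
      using that unfolding f_def by (simp add: double_diff mult.commute)
    have fnz: "odd_inv (K - I) I = (\<not> odd_inv I (K - I))" if "I \<in> Pow K" "f I \<noteq> 0" for I
    proof -
      have "card I = 1" "card (K - I) = 1" using that w1 unfolding f_def by (metis mult_zero_left mult_zero_right)+
      then obtain i j where i: "I = {i}" and j: "K - I = {j}" by (meson card_1_singletonE)
      have "j \<in> K - I" using j by simp
      then have "j \<notin> I" by simp
      then have ij: "i \<noteq> j" using i by simp
      have "odd_inv (K - I) I = (i < j)" using i j by (simp add: odd_inv_single)
      moreover have "odd_inv I (K - I) = (j < i)" using i j by (simp add: odd_inv_single)
      ultimately show ?thesis using ij by auto
    qed
    have inj: "inj_on (\<lambda>I. K - I) (Pow K)" by (auto simp: inj_on_def)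
    have img: "(\<lambda>I. K - I) ` Pow K = Pow K"
    proof
      show "(\<lambda>I. K - I) ` Pow K \<subseteq> Pow K" by auto
      show "Pow K \<subseteq> (\<lambda>I. K - I) ` Pow K"
      proof
        fix J assume "J \<in> Pow K"
        then have "J = K - (K - J)" by auto
        then show "J \<in> (\<lambda>I. K - I) ` Pow K" by (rule image_eqI) simp
      qed
    qed
    have "(\<Sum>I\<in>Pow K. if odd_inv I (K - I) = t then f I else 0)
        = (\<Sum>I\<in>(\<lambda>I. K - I) ` Pow K. if odd_inv I (K - I) = t then f I else 0)"
      using img by simp
    also have "\<dots> = (\<Sum>I\<in>Pow K. if odd_inv (K - I) (K - (K - I)) = t then f (K - I) else 0)"
      using inj by (simp add: sum.reindex)
    also have "\<dots> = (\<Sum>I\<in>Pow K. if odd_inv I (K - I) = (\<not> t) then f I else 0)"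
    proof (rule sum.cong[OF refl])
      fix I assume I: "I \<in> Pow K"
      then have "K - (K - I) = I" by auto
      then show "(if odd_inv (K - I) (K - (K - I)) = t then f (K - I) else 0)
          = (if odd_inv I (K - I) = (\<not> t) then f I else 0)"
        using fsym[OF I] fnz[OF I] by (cases "f I = 0") auto
    qed
    finally show ?thesis using step1 by simp
  qed
  from this[where t=False] show ?thesis unfolding symm_def by simp
qed

lemma qz_symm: "qz_ideal n r x \<Longrightarrow> symm x"
proof (induction rule: qz_ideal.induct)
  case (zero r) then show ?case by (simp add: symm_def)
next
  case (quasi_zero r x) then show ?case by (simp add: symm_def add.commute)
next
  case (square w) then show ?case by (rule wedge_sq_symm)
next
  case (add r x y) then show ?case by (simp add: symm_def)
next
  case (mult_left r x s y) show ?case by (rule wedge_symm_right[OF mult_left.IH])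
next
  case (mult_right r x s y) show ?case by (rule wedge_symm_left[OF mult_right.IH])
qed

theorem proposition2p16:
  fixes u u' :: "('a::comm_semiring_1) gelem" and n k :: nat
  assumes "2 \<le> k" and "k < n"
    and "grass_hom n k u" and "grass_hom n k u'"
  shows "((\<forall>v. grass_hom n (n - k) v \<longrightarrow> wedge u v = wedge u' v) \<longrightarrow> u = u')
       \<and> (\<not> qz_ideal n k u \<longrightarrow> (\<exists>v. grass_hom n (n - k) v \<and> \<not> qz_ideal n n (wedge u v)))"
proof (intro conjI impI)
  assume H: "\<forall>v. grass_hom n (n - k) v \<longrightarrow> wedge u v = wedge u' v"
  show "u = u'"
  proof (intro ext)
    fix I t
    show "u I t = u' I t"
    proof (cases "I \<subseteq> {..<n} \<and> card I = k")
      case True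
      let ?o = "odd_inv I ({..<n} - I)"
      have g: "grass_hom n (n - k) (vJ ({..<n} - I) :: 'a gelem)"
        using grass_hom_vJ[of I n k] True assms(2) by blast
      have "wedge u (vJ ({..<n} - I)) = wedge u' (vJ ({..<n} - I))"
        using H g by blast
      then have "wedge u (vJ ({..<n} - I)) {..<n} (t \<noteq> ?o) = wedge u' (vJ ({..<n} - I)) {..<n} (t \<noteq> ?o)"
        by simp
      then have "u I ((t \<noteq> ?o) \<noteq> ?o) = u' I ((t \<noteq> ?o) \<noteq> ?o)"
        using True by (simp only: wedge_vJ)
      moreover have "((t \<noteq> ?o) \<noteq> ?o) = t" by blast
      ultimately show ?thesis by simp
    next
      case False
      then have "u I t = 0" "u' I t = 0" using assms(3,4) unfolding grass_hom_def by blast+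
      then show ?thesis by simp
    qed
  qed
next
  assume nq: "\<not> qz_ideal n k u"
  show "\<exists>v. grass_hom n (n - k) v \<and> \<not> qz_ideal n n (wedge u v)"
  proof (rule ccontr)
    assume "\<not> ?thesis"
    then have H: "\<And>v. grass_hom n (n - k) v \<Longrightarrow> symm (wedge u v)"
      using qz_symm by blast
    have su: "u I False = u I True" for I
    proof (cases "I \<subseteq> {..<n} \<and> card I = k")
      case True
      let ?o = "odd_inv I ({..<n} - I)"
      have g: "grass_hom n (n - k) (vJ ({..<n} - I) :: 'a gelem)"
        using grass_hom_vJ[of I n k] True assms(2) by blast
      have "symm (wedge u (vJ ({..<n} - I)))"
        using H g by blast
      then have "wedge u (vJ ({..<n} - I)) {..<n} False = wedge u (vJ ({..<n} - I)) {..<n} True"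
        unfolding symm_def by blast
      then have "u I (False \<noteq> ?o) = u I (True \<noteq> ?o)"
        using True by (simp only: wedge_vJ)
      then show ?thesis by (cases ?o) auto
    next
      case False
      then have "u I False = 0" "u I True = 0" using assms(3) unfolding grass_hom_def by blast+
      then show ?thesis by simp
    qed
    define x where "x = (\<lambda>I t. if t then 0 else u I False)"
    have gx: "grass_hom n k x"
      using assms(1,3) unfolding grass_hom_def x_def by auto
    have "u = (\<lambda>I t. x I t + x I (\<not> t))"
      using su unfolding x_def by (intro ext) simp
    then have "qz_ideal n k u" using qz_ideal.quasi_zero[OF assms(1) gx] by simp
    then show False using nq by blast
  qed
qed

end
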